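(* Let $\Lambda\subset\mathbb{C}$ be a lattice, $p,q\ge2$ integers, $r\ge1$, and $U(z)=\exp(\zeta(pqz,\Lambda)N_r)$. Then $$A_r^{sp}(z)=U(z/p)\,T_r^{sp}\,U(z)^{-1},\qquad T_r^{sp}=\mathrm{diag}[1,p,\dots,p^{r-1}].$$
   Context: $\zeta(z,\Lambda)$ is the Weierstrass zeta function of $\Lambda$; $N_r$ is the $r\times r$ matrix with $1$ at positions $(i,i+1)$ and $0$ elsewhere. $g_p(z)=p\zeta(qz,\Lambda)-\zeta(pqz,\Lambda)$. $A_r^{sp}(z)=(a_{ij})$ is the $r\times r$ matrix with $a_{ij}=0$ for $j<i$ and $a_{ij}=\frac{p^{i-1}}{(j-i)!}g_p(z)^{j-i}$ for $i\le j$. *)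

theory Defs
  imports "HOL-Analysis.Analysis" "Jordan_Normal_Form.Matrix" "Jordan_Normal_Form.Gauss_Jordan_Elimination"
begin

definition is_lattice :: "complex set \<Rightarrow> bool" where
  "is_lattice L \<longleftrightarrow> (\<exists>w1 w2. w1 \<noteq> 0 \<and> w2 / w1 \<notin> \<real> \<and>
      L = {of_int m * w1 + of_int n * w2 | m n. True})"

definition weierstrass_zeta :: "complex \<Rightarrow> complex set \<Rightarrow> complex" where
  "weierstrass_zeta z L =
     1 / z + (\<Sum>\<^sub>\<infinity> w \<in> L - {0}. 1 / (z - w) + 1 / w + z / w ^ 2)"

definition mat_exp :: "complex mat \<Rightarrow> complex mat" where
  "mat_exp A = mat (dim_row A) (dim_col A) (\<lambda>(i,j). \<Sum>k. (A ^\<^sub>m k) $$ (i,j) / fact k)"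

definition mat_inv :: "complex mat \<Rightarrow> complex mat" where
  "mat_inv A = the (mat_inverse A)"

definition nilp_N :: "nat \<Rightarrow> complex mat" where
  "nilp_N r = mat r r (\<lambda>(i,j). if j = i + 1 then 1 else 0)"

definition g_p :: "nat \<Rightarrow> nat \<Rightarrow> complex set \<Rightarrow> complex \<Rightarrow> complex" where
  "g_p p q L z = of_nat p * weierstrass_zeta (of_nat q * z) L
                 - weierstrass_zeta (of_nat p * of_nat q * z) L"

definition A_sp :: "nat \<Rightarrow> nat \<Rightarrow> nat \<Rightarrow> complex set \<Rightarrow> complex \<Rightarrow> complex mat" where
  "A_sp r p q L z = mat r r (\<lambda>(i,j). if j < i then 0
      else of_nat p ^ i / fact (j - i) * g_p p q L z ^ (j - i))"

definition T_sp :: "nat \<Rightarrow> nat \<Rightarrow> complex mat" where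
  "T_sp r p = mat r r (\<lambda>(i,j). if i = j then of_nat p ^ i else 0)"

definition U_mat :: "nat \<Rightarrow> nat \<Rightarrow> nat \<Rightarrow> complex set \<Rightarrow> complex \<Rightarrow> complex mat" where
  "U_mat r p q L z = mat_exp (weierstrass_zeta (of_nat p * of_nat q * z) L \<cdot>\<^sub>m nilp_N r)"

end

theory Submission
  imports Defs
begin

definition E :: "nat \<Rightarrow> complex \<Rightarrow> complex mat" where
  "E r c = mat r r (\<lambda>(i,j). if i \<le> j then c ^ (j - i) / fact (j - i) else 0)"

lemma conv_sum:
  fixes x y :: complex
  shows "(\<Sum>m\<le>n. x ^ m / fact m * (y ^ (n - m) / fact (n - m))) = (x + y) ^ n / fact n"
proof -
  have "(x + y) ^ n = (\<Sum>m\<le>n. of_nat (n choose m) * x ^ m * y ^ (n - m))"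
    by (simp add: binomial_ring)
  also have "\<dots> = (\<Sum>m\<le>n. fact n * (x ^ m / fact m * (y ^ (n - m) / fact (n - m))))"
    by (rule sum.cong) (auto simp: binomial_fact)
  also have "\<dots> = fact n * (\<Sum>m\<le>n. x ^ m / fact m * (y ^ (n - m) / fact (n - m)))"
    by (rule sum_distrib_left[symmetric])
  finally show ?thesis by simp
qed

lemma conv_sum2:
  fixes x y :: complex
  assumes "i \<le> j" "j < r"
  shows "(\<Sum>k\<in>{0..<r}. (if i \<le> k then x ^ (k - i) / fact (k - i) else 0) *
           (if k \<le> j then y ^ (j - k) / fact (j - k) else 0)) = (x + y) ^ (j - i) / fact (j - i)"
proof -
  have "(\<Sum>k\<in>{0..<r}. (if i \<le> k then x ^ (k - i) / fact (k - i) else 0) *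
           (if k \<le> j then y ^ (j - k) / fact (j - k) else 0))
      = (\<Sum>k\<in>{i..j}. x ^ (k - i) / fact (k - i) * (y ^ (j - k) / fact (j - k)))"
    using assms by (intro sum.mono_neutral_cong_right) auto
  also have "\<dots> = (\<Sum>m\<le>j-i. x ^ m / fact m * (y ^ (j - i - m) / fact (j - i - m)))"
  proof (rule sum.reindex_bij_witness[where i="\<lambda>m. m + i" and j="\<lambda>k. k - i"])
  qed (use assms in auto)
  also have "\<dots> = (x + y) ^ (j - i) / fact (j - i)" by (rule conv_sum)
  finally show ?thesis .
qed

lemma E_carrier[simp]: "E r c \<in> carrier_mat r r" by (simp add: E_def)

lemma E_mult: "E r x * E r y = E r (x + y)"
proof (rule eq_matI)
  fix i j assume ij: "i < dim_row (E r (x + y))" "j < dim_col (E r (x + y))"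
  show "(E r x * E r y) $$ (i, j) = E r (x + y) $$ (i, j)"
  proof (cases "i \<le> j")
    case True
    then show ?thesis using ij conv_sum2[OF True, of r x y]
      by (simp add: E_def scalar_prod_def)
  next
    case False
    then show ?thesis using ij
      by (auto simp: E_def scalar_prod_def intro!: sum.neutral)
  qed
qed (auto simp: E_def)

lemma E_zero: "E r 0 = 1\<^sub>m r"
  by (rule eq_matI) (auto simp: E_def)

lemma N_dim[simp]: "dim_row (nilp_N r) = r" "dim_col (nilp_N r) = r"
  by (simp_all add: nilp_N_def)

lemma N_idx: "i < r \<Longrightarrow> j < r \<Longrightarrow> nilp_N r $$ (i,j) = (if j = i + 1 then 1 else 0)"
  by (simp add: nilp_N_def)

lemma N_pow: "(c \<cdot>\<^sub>m nilp_N r) ^\<^sub>m k = mat r r (\<lambda>(i,j). if j = i + k then c ^ k else 0)"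
proof (induction k)
  case 0
  then show ?case by (auto simp: nilp_N_def)
next
  case (Suc k)
  show ?case
  proof (rule eq_matI)
    fix i j assume ij: "i < dim_row (mat r r (\<lambda>(i,j). if j = i + Suc k then c ^ Suc k else (0::complex)))"
      "j < dim_col (mat r r (\<lambda>(i,j). if j = i + Suc k then c ^ Suc k else (0::complex)))"
    have "((c \<cdot>\<^sub>m nilp_N r) ^\<^sub>m Suc k) $$ (i, j) = (\<Sum>l\<in>{0..<r}. ((c \<cdot>\<^sub>m nilp_N r) ^\<^sub>m k) $$ (i,l) * (c \<cdot>\<^sub>m nilp_N r) $$ (l,j))"
      using ij by (simp add: scalar_prod_def nilp_N_def)
    also have "\<dots> = (\<Sum>l\<in>{0..<r}. if l = i + k then (if j = Suc (i + k) then c ^ Suc k else 0) else 0)"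
      using ij by (intro sum.cong) (auto simp: Suc.IH N_idx)
    also have "\<dots> = (if j = i + Suc k then c ^ Suc k else 0)"
      using ij by auto
    finally show "((c \<cdot>\<^sub>m nilp_N r) ^\<^sub>m Suc k) $$ (i, j) = mat r r (\<lambda>(i,j). if j = i + Suc k then c ^ Suc k else 0) $$ (i, j)"
      using ij by simp
  qed (auto simp: Suc nilp_N_def)
qed

lemma exp_N: "mat_exp (c \<cdot>\<^sub>m nilp_N r) = E r c"
proof (rule eq_matI)
  fix i j assume ij: "i < dim_row (E r c)" "j < dim_col (E r c)"
  have "(\<Sum>k. (if j = i + k then c ^ k else 0) / fact k) = (if i \<le> j then c ^ (j - i) / fact (j - i) else 0)"
  proof (cases "i \<le> j")
    case True
    have "(\<lambda>k. (if j = i + k then c ^ k else 0) / fact k) = (\<lambda>k. if k = j - i then c ^ k / fact k else 0)"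
      using True by auto
    then show ?thesis using True sums_single[of "j - i" "\<lambda>k. c ^ k / fact k"]
      by (simp add: sums_iff)
  next
    case False
    then show ?thesis by simp
  qed
  then show "mat_exp (c \<cdot>\<^sub>m nilp_N r) $$ (i, j) = E r c $$ (i, j)"
    using ij by (simp add: mat_exp_def N_pow E_def N_dim)
qed (auto simp: mat_exp_def E_def nilp_N_def)

lemma inv_E: "mat_inv (E r b) = E r (- b)"
proof -
  have AB: "E r b * E r (-b) = 1\<^sub>m r" and BA: "E r (-b) * E r b = 1\<^sub>m r"
    by (simp_all add: E_mult E_zero)
  have U: "E r b \<in> Units (ring_mat TYPE(complex) r undefined)"
    unfolding Units_def ring_mat_simps using AB BA E_carrier by blast
  have "mat_inverse (E r b) \<noteq> None"
  proof
    assume "mat_inverse (E r b) = None"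
    from mat_inverse(1)[OF E_carrier this, of undefined] U show False by blast
  qed
  then obtain B where B: "mat_inverse (E r b) = Some B" by auto
  from mat_inverse(2)[OF E_carrier B] have B1: "B * E r b = 1\<^sub>m r" and Bc: "B \<in> carrier_mat r r" by auto
  have "B = B * (E r b * E r (-b))" using AB Bc by simp
  also have "\<dots> = (B * E r b) * E r (-b)" using Bc by (simp add: assoc_mult_mat[of _ r r _ r _ r])
  also have "\<dots> = E r (-b)" using B1 by (simp add: left_mult_one_mat[OF E_carrier])
  finally show ?thesis using B by (simp add: mat_inv_def)
qed

lemma mult_T: assumes "M \<in> carrier_mat r r"
  shows "M * T_sp r p = mat r r (\<lambda>(i,j). M $$ (i,j) * of_nat p ^ j)"
proof (rule eq_matI)
  fix i j assume ij: "i < dim_row (mat r r (\<lambda>(i,j). M $$ (i,j) * of_nat p ^ j))"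
    "j < dim_col (mat r r (\<lambda>(i,j). M $$ (i,j) * (of_nat p::complex) ^ j))"
  have "(\<Sum>k\<in>{0..<r}. M $$ (i,k) * (if k = j then of_nat p ^ k else 0))
      = (\<Sum>k\<in>{0..<r}. if k = j then M $$ (i,j) * (of_nat p::complex) ^ j else 0)"
    by (rule sum.cong) auto
  also have "\<dots> = M $$ (i,j) * of_nat p ^ j" using ij by simp
  finally show "(M * T_sp r p) $$ (i, j) = mat r r (\<lambda>(i,j). M $$ (i,j) * of_nat p ^ j) $$ (i, j)"
    using ij assms by (simp add: T_sp_def scalar_prod_def)
qed (use assms in \<open>auto simp: T_sp_def\<close>)

lemma T_mult: assumes "M \<in> carrier_mat r r"
  shows "T_sp r p * M = mat r r (\<lambda>(i,j). of_nat p ^ i * M $$ (i,j))"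
proof (rule eq_matI)
  fix i j assume ij: "i < dim_row (mat r r (\<lambda>(i,j). of_nat p ^ i * M $$ (i,j)))"
    "j < dim_col (mat r r (\<lambda>(i,j). (of_nat p::complex) ^ i * M $$ (i,j)))"
  have "(\<Sum>k\<in>{0..<r}. (if i = k then of_nat p ^ i else 0) * M $$ (k,j))
      = (\<Sum>k\<in>{0..<r}. if k = i then (of_nat p::complex) ^ i * M $$ (i,j) else 0)"
    by (rule sum.cong) auto
  also have "\<dots> = of_nat p ^ i * M $$ (i,j)" using ij by simp
  finally show "(T_sp r p * M) $$ (i, j) = mat r r (\<lambda>(i,j). of_nat p ^ i * M $$ (i,j)) $$ (i, j)"
    using ij assms by (simp add: T_sp_def scalar_prod_def)
qed (use assms in \<open>auto simp: T_sp_def\<close>)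

lemma E_T: "E r a * T_sp r p = T_sp r p * E r (of_nat p * a)"
  unfolding mult_T[OF E_carrier] T_mult[OF E_carrier]
proof (rule eq_matI)
  fix i j assume ij: "i < dim_row (mat r r (\<lambda>(i, j). of_nat p ^ i * E r (of_nat p * a) $$ (i, j)))"
    "j < dim_col (mat r r (\<lambda>(i, j). (of_nat p::complex) ^ i * E r (of_nat p * a) $$ (i, j)))"
  have "i \<le> j \<Longrightarrow> (of_nat p::complex) ^ j = of_nat p ^ i * of_nat p ^ (j - i)"
    by (metis le_add_diff_inverse power_add)
  then show "mat r r (\<lambda>(i, j). E r a $$ (i, j) * of_nat p ^ j) $$ (i, j) =
         mat r r (\<lambda>(i, j). of_nat p ^ i * E r (of_nat p * a) $$ (i, j)) $$ (i, j)"
    using ij by (simp add: E_def power_mult_distrib)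
qed auto

theorem lemma5p9:
  fixes L :: "complex set" and p q r :: nat and z :: complex
  assumes "is_lattice L" and "p \<ge> 2" and "q \<ge> 2" and "r \<ge> 1"
    and "of_nat p * of_nat q * z \<notin> L"
  shows "A_sp r p q L z =
           U_mat r p q L (z / of_nat p) * T_sp r p * mat_inv (U_mat r p q L z)"
proof -
  define a where "a = weierstrass_zeta (of_nat q * z) L"
  define b where "b = weierstrass_zeta (of_nat p * of_nat q * z) L"
  have pz: "of_nat p * of_nat q * (z / of_nat p) = of_nat q * (z::complex)"
    using assms(2) by (simp add: field_simps)
  have U1: "U_mat r p q L (z / of_nat p) = E r a"
    unfolding U_mat_def pz a_def exp_N ..
  have U2: "U_mat r p q L z = E r b"
    unfolding U_mat_def b_def exp_N ..
  have g: "g_p p q L z = of_nat p * a - b" unfolding g_p_def a_def b_def ..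
  have "U_mat r p q L (z / of_nat p) * T_sp r p * mat_inv (U_mat r p q L z)
      = T_sp r p * E r (of_nat p * a) * E r (- b)"
    unfolding U1 U2 inv_E E_T ..
  also have "\<dots> = T_sp r p * (E r (of_nat p * a) * E r (- b))"
    by (rule assoc_mult_mat[of _ r r _ r _ r]) (auto simp: T_sp_def)
  also have "\<dots> = T_sp r p * E r (g_p p q L z)"
    unfolding E_mult g by simp
  also have "\<dots> = A_sp r p q L z"
    unfolding T_mult[OF E_carrier] by (rule eq_matI) (auto simp: A_sp_def E_def)
  finally show ?thesis by simp
qed

end
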